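(* Let $X$ be a Banach space, $H$ a Hilbert space, $T\in\mathcal L(X,H)$, $f\in H$, $J$ a seminorm on $X$ such that all Tikhonov functionals below have minimizers, and $(\lambda_k)\subset(0,\infty)$. Let $x_k$ be the MHDM iterates and $x_{\lambda_k}$ any minimizer of $x\mapsto\frac{\lambda_k}{2}\|Tx-f\|^2+J(x)$. Then for every $k\in\mathbb N_0$, $$|T^*T(x_{\lambda_k}-x_k)|_*\le\frac{2}{\lambda_k}.$$
   Context: Seminorm: $J:X\to[0,\infty]$ with $J(\alpha x)=|\alpha|J(x)$, $J(x+y)\le J(x)+J(y)$. Dual seminorm: for $x^*\in X^*$, $|x^*|_*=\sup_{J(x)\ne0}\langle x^*,x/J(x)\rangle$, with the convention $x/J(x)=0$ if $J(x)=\infty$. MHDM: $x_0\in\arg\min_x\frac{\lambda_0}{2}\|Tx-f\|^2+J(x)$, and for $k\ge1$, $x_k\in\arg\min_x\frac{\lambda_k}{2}\|Tx-f\|^2+J(x-x_{k-1})$ (equivalently $x_k=x_{k-1}+u_k$ with $u_k\in\arg\min_u\frac{\lambda_k}{2}\|f-Tx_{k-1}-Tu\|^2+J(u)$). *)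

theory Defs
  imports "HOL-Analysis.Analysis" "HOL-Library.Extended_Nonnegative_Real" "HOL-Library.Extended_Real"
begin

definition is_seminorm :: "('a::real_vector \<Rightarrow> ennreal) \<Rightarrow> bool" where
  "is_seminorm J \<longleftrightarrow>
     (\<forall>\<alpha>::real. \<forall>x. J (\<alpha> *\<^sub>R x) = ennreal \<bar>\<alpha>\<bar> * J x) \<and>
     (\<forall>x y. J (x + y) \<le> J x + J y)"

definition dual_seminorm :: "('a::real_vector \<Rightarrow> ennreal) \<Rightarrow> ('a \<Rightarrow> real) \<Rightarrow> ereal" where
  "dual_seminorm J \<phi> =
     (SUP x \<in> {x. J x \<noteq> 0}.
        ereal (if J x = \<infinity> then 0 else \<phi> x / enn2real (J x)))"

definition tikh :: "('a \<Rightarrow> 'b::real_normed_vector) \<Rightarrow> ('a::real_vector \<Rightarrow> ennreal)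
    \<Rightarrow> real \<Rightarrow> 'b \<Rightarrow> 'a \<Rightarrow> 'a \<Rightarrow> ennreal" where
  "tikh T J lam f c x = ennreal (lam / 2 * (norm (T x - f))\<^sup>2) + J (x - c)"

definition is_minimizer :: "('a \<Rightarrow> ennreal) \<Rightarrow> 'a \<Rightarrow> bool" where
  "is_minimizer F x \<longleftrightarrow> (\<forall>y. F x \<le> F y)"

definition MHDM_iterates :: "('a \<Rightarrow> 'b::real_normed_vector) \<Rightarrow> ('a::real_vector \<Rightarrow> ennreal)
    \<Rightarrow> (nat \<Rightarrow> real) \<Rightarrow> 'b \<Rightarrow> (nat \<Rightarrow> 'a) \<Rightarrow> bool" where
  "MHDM_iterates T J lam f xs \<longleftrightarrow>
     is_minimizer (tikh T J (lam 0) f 0) (xs 0) \<and>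
     (\<forall>k. is_minimizer (tikh T J (lam (Suc k)) f (xs k)) (xs (Suc k)))"

end

theory Submission
  imports Defs
begin

lemma real_lim_aux:
  fixes c d :: real
  assumes "\<And>t. t > 0 \<Longrightarrow> 0 \<le> c + t * d" "d \<ge> 0"
  shows "0 \<le> c"
proof (rule ccontr)
  assume n: "\<not> 0 \<le> c"
  show False
  proof (cases "d = 0")
    case True
    with assms(1)[of 1] n show False by simp
  next
    case False
    with assms(2) have "d > 0" by simp
    define t where "t = - c / (2 * d)"
    have "t > 0" using n \<open>d > 0\<close> unfolding t_def by (intro divide_pos_pos) auto
    have "t * d = - c / 2" using \<open>d > 0\<close> unfolding t_def by (simp add: field_simps)
    with assms(1)[OF \<open>t > 0\<close>] n show False by simp
  qed
qed

lemma norm_sq_aux: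
  fixes u w :: "'b::real_inner"
  shows "(norm (u + t *\<^sub>R w))\<^sup>2 = (norm u)\<^sup>2 + 2 * t * inner u w + t\<^sup>2 * (norm w)\<^sup>2"
  unfolding power2_norm_eq_inner
  by (simp add: inner_add_left inner_add_right inner_commute[of w u] power2_eq_square algebra_simps)

lemma semi_zero: "is_seminorm J \<Longrightarrow> J 0 = 0"
  unfolding is_seminorm_def
  by (metis abs_zero ennreal_0 mult_zero_left scaleR_zero_left)

lemma semi_neg: "is_seminorm J \<Longrightarrow> J (- x) = J x"
  unfolding is_seminorm_def
  by (metis abs_neg_one ennreal_1 mult_1 scaleR_minus1_left)

lemma opt:
  fixes T :: "'a::real_normed_vector \<Rightarrow> 'b::real_inner"
  assumes T: "bounded_linear T" and J: "is_seminorm J" and lam: "lam > 0"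
    and mz: "is_minimizer (tikh T J lam f c) z" and fin: "J v \<noteq> \<infinity>"
  shows "lam * inner (f - T z) (T v) \<le> enn2real (J v)"
proof -
  have Fz: "tikh T J lam f c z \<le> tikh T J lam f c y" for y
    using mz unfolding is_minimizer_def by blast
  have "tikh T J lam f c z \<le> tikh T J lam f c c" by (rule Fz)
  also have "\<dots> < \<infinity>" unfolding tikh_def using semi_zero[OF J] by simp
  finally have rfin: "J (z - c) \<noteq> \<infinity>" unfolding tikh_def by (auto simp: top_unique)
  define R where "R = enn2real (J (z - c))"
  define jv where "jv = enn2real (J v)"
  have Rr: "J (z - c) = ennreal R" "R \<ge> 0" using rfin unfolding R_def
    by (auto simp: less_top ennreal_enn2real)
  have jr: "J v = ennreal jv" "jv \<ge> 0" using fin unfolding jv_def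
    by (auto simp: less_top ennreal_enn2real)
  define a where "a = inner (T z - f) (T v)"
  define A where "A = lam / 2 * (norm (T z - f))\<^sup>2"
  have key: "0 \<le> (lam * a + jv) + t * (lam / 2 * (norm (T v))\<^sup>2)" if t: "t > 0" for t
  proof -
    define B where "B = lam / 2 * (norm (T (z + t *\<^sub>R v) - f))\<^sup>2"
    have "J (z + t *\<^sub>R v - c) = J ((z - c) + t *\<^sub>R v)" by (simp add: algebra_simps)
    also have "\<dots> \<le> J (z - c) + J (t *\<^sub>R v)" using J unfolding is_seminorm_def by blast
    also have "J (t *\<^sub>R v) = ennreal t * J v" using J t unfolding is_seminorm_def by simp
    finally have Jle: "J (z + t *\<^sub>R v - c) \<le> ennreal (R + t * jv)"
      using Rr jr t by (simp add: ennreal_plus ennreal_mult)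
    have "ennreal A + ennreal R \<le> ennreal B + J (z + t *\<^sub>R v - c)"
      using Fz[of "z + t *\<^sub>R v"] Rr unfolding tikh_def A_def B_def by simp
    also have "\<dots> \<le> ennreal B + ennreal (R + t * jv)" using Jle by (rule add_left_mono)
    finally have ie: "ennreal A + ennreal R \<le> ennreal B + ennreal (R + t * jv)" .
    have A0: "A \<ge> 0" using lam unfolding A_def by simp
    have B0: "B \<ge> 0" using lam unfolding B_def by simp
    have RT0: "R + t * jv \<ge> 0" using Rr jr t by simp
    have "ennreal (A + R) \<le> ennreal (B + (R + t * jv))"
      using ie by (simp only: ennreal_plus[OF A0 Rr(2)] ennreal_plus[OF B0 RT0])
    moreover have "B + (R + t * jv) \<ge> 0" using B0 RT0 by simp
    ultimately have le: "A + R \<le> B + (R + t * jv)" by (simp add: ennreal_le_iff)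
    have "T (z + t *\<^sub>R v) - f = (T z - f) + t *\<^sub>R T v"
      using bounded_linear.linear[OF T] by (simp add: linear_add linear_scale linear_diff algebra_simps)
    hence nsq: "(norm (T (z + t *\<^sub>R v) - f))\<^sup>2
        = (norm (T z - f))\<^sup>2 + 2 * t * a + t\<^sup>2 * (norm (T v))\<^sup>2"
      unfolding a_def by (simp only: norm_sq_aux)
    have Beq: "B = A + lam * t * a + lam / 2 * t\<^sup>2 * (norm (T v))\<^sup>2"
      unfolding B_def A_def nsq by (simp add: ring_distribs)
    have "t * ((lam * a + jv) + t * (lam / 2 * (norm (T v))\<^sup>2))
        = lam * t * a + lam / 2 * t\<^sup>2 * (norm (T v))\<^sup>2 + t * jv"
      by (simp add: ring_distribs power2_eq_square)
    with le Beq have "0 \<le> t * ((lam * a + jv) + t * (lam / 2 * (norm (T v))\<^sup>2))"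
      by linarith
    with t show ?thesis by (simp add: zero_le_mult_iff)
  qed
  have "0 \<le> lam * a + jv"
    using lam by (intro real_lim_aux[OF key] mult_nonneg_nonneg) auto
  moreover have "inner (f - T z) (T v) = - a" unfolding a_def
    by (simp add: inner_diff_left)
  ultimately show ?thesis unfolding jv_def by simp
qed

lemma xs_min: "MHDM_iterates T J lam f xs \<Longrightarrow> \<exists>c. is_minimizer (tikh T J (lam k) f c) (xs k)"
  unfolding MHDM_iterates_def by (cases k) auto

theorem mainTheorem9:
  fixes T :: "'a::banach \<Rightarrow> 'b::{real_inner, complete_space}"
    and J :: "'a \<Rightarrow> ennreal"
    and f :: 'b
    and lam :: "nat \<Rightarrow> real"
    and xs :: "nat \<Rightarrow> 'a"
    and z :: 'a
    and k :: nat
  assumes "bounded_linear T"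
    and "is_seminorm J"
    and "\<forall>n. lam n > 0"
    and "MHDM_iterates T J lam f xs"
    and "is_minimizer (tikh T J (lam k) f 0) z"
  shows "dual_seminorm J (\<lambda>x. inner (T (z - xs k)) (T x)) \<le> ereal (2 / lam k)"
proof -
  have lp: "lam k > 0" using assms(3) by blast
  obtain c where mc: "is_minimizer (tikh T J (lam k) f c) (xs k)"
    using xs_min[OF assms(4)] by blast
  show ?thesis
    unfolding dual_seminorm_def
  proof (rule SUP_least)
    fix x assume "x \<in> {x. J x \<noteq> 0}"
    hence nz: "J x \<noteq> 0" by simp
    show "ereal (if J x = \<infinity> then 0 else inner (T (z - xs k)) (T x) / enn2real (J x))
          \<le> ereal (2 / lam k)"
    proof (cases "J x = \<infinity>")
      case True then show ?thesis using lp by simp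
    next
      case False
      define jv where "jv = enn2real (J x)"
      have jpos: "jv > 0" using nz False unfolding jv_def
        by (simp add: enn2real_positive_iff less_top[symmetric] zero_less_iff_neq_zero)
      have h1: "lam k * inner (f - T (xs k)) (T x) \<le> jv"
        using opt[OF assms(1,2) lp mc False] unfolding jv_def .
      have F2: "J (- x) \<noteq> \<infinity>" using False semi_neg[OF assms(2)] by simp
      have h2: "lam k * inner (f - T z) (T (- x)) \<le> jv"
        using opt[OF assms(1,2) lp assms(5) F2] semi_neg[OF assms(2)] unfolding jv_def by simp
      have eq: "inner (T (z - xs k)) (T x) = inner (f - T (xs k)) (T x) - inner (f - T z) (T x)"
        using bounded_linear.linear[OF assms(1)] by (simp add: linear_diff inner_diff_left)
      have "T (- x) = - T x" using bounded_linear.linear[OF assms(1)] by (simp add: linear_neg)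
      with h2 have h2': "- (lam k * inner (f - T z) (T x)) \<le> jv" by simp
      have "lam k * inner (T (z - xs k)) (T x)
          = lam k * inner (f - T (xs k)) (T x) - lam k * inner (f - T z) (T x)"
        by (simp only: eq right_diff_distrib)
      hence "lam k * inner (T (z - xs k)) (T x) \<le> 2 * jv"
        using h1 h2' by linarith
      hence "inner (T (z - xs k)) (T x) / jv \<le> 2 / lam k"
        using lp jpos by (simp add: divide_simps mult.commute)
      then show ?thesis using False unfolding jv_def by simp
    qed
  qed
qed

end
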